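(* Let $S$ be a closed orientable surface, $f\in\mathrm{Diff}(S)_0$, $S_2$ a (connected) two-fold cover of $S$, and $f_2\in\mathrm{Diff}(S_2)_0$ a lift of $f$. If $f$ is a distortion element of a finitely generated subgroup $G$ of $\mathrm{Diff}(S)_0$, then $f_2$ is a distortion element of some finitely generated subgroup $G_2$ of $\mathrm{Diff}(S_2)_0$.
   Context: $\mathrm{Diff}(S)_0$ is the identity component of the group of $C^1$ diffeomorphisms of $S$. For a finitely generated group with finite generating set, $f$ is a distortion element if it has infinite order and $\liminf_{n\to\infty}|f^n|/n=0$, $|\cdot|$ the word length. *)

theory Defs
  imports "HOL-Analysis.Analysis"
begin

text \<open>Closed orientable surfaces are modelled as compact connected C1 embedded
 2-dimensional submanifolds of R^3 (every closed orientable surface arises this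
 way, and every compact embedded surface in R^3 is orientable).\<close>

type_synonym pt = "real^3"

definition C1_on :: "('a::euclidean_space \<Rightarrow> 'b::euclidean_space) \<Rightarrow> 'a set \<Rightarrow> bool" where
  "C1_on g U \<longleftrightarrow> (\<exists>g'. (\<forall>x\<in>U. (g has_derivative blinfun_apply (g' x)) (at x))
                         \<and> continuous_on U g')"

definition chart :: "pt set \<Rightarrow> ((real^2) \<Rightarrow> pt) \<Rightarrow> ((real^2) \<Rightarrow> ((real^2) \<Rightarrow>\<^sub>L pt)) \<Rightarrow> (real^2) set \<Rightarrow> bool" where
  "chart S \<phi> \<phi>' V \<longleftrightarrow> open V \<and>
     (\<forall>v\<in>V. (\<phi> has_derivative blinfun_apply (\<phi>' v)) (at v)) \<and> continuous_on V \<phi>' \<and>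
     (\<forall>v\<in>V. inj (blinfun_apply (\<phi>' v))) \<and>
     \<phi> ` V \<subseteq> S \<and> openin (top_of_set S) (\<phi> ` V) \<and>
     (\<exists>\<psi>. homeomorphism V (\<phi> ` V) \<phi> \<psi>)"

definition closed_surface :: "pt set \<Rightarrow> bool" where
  "closed_surface S \<longleftrightarrow> compact S \<and> connected S \<and> S \<noteq> {} \<and>
     (\<forall>x\<in>S. \<exists>\<phi> \<phi>' V. chart S \<phi> \<phi>' V \<and> x \<in> \<phi> ` V)"

definition C1_map :: "pt set \<Rightarrow> pt set \<Rightarrow> (pt \<Rightarrow> pt) \<Rightarrow> bool" where
  "C1_map A B f \<longleftrightarrow> f ` A \<subseteq> B \<and>
     (\<forall>x\<in>A. \<exists>U g. open U \<and> x \<in> U \<and> C1_on g U \<and> (\<forall>y\<in>A \<inter> U. g y = f y))"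

definition dinv :: "pt set \<Rightarrow> (pt \<Rightarrow> pt) \<Rightarrow> (pt \<Rightarrow> pt)" where
  "dinv S f = (\<lambda>x. if x \<in> S then inv_into S f x else x)"

text \<open>Diff(S): C1 diffeomorphisms of S (represented as maps of R^3 that are the
 identity off S, so that the group operation is composition with unit id).\<close>
definition Diff :: "pt set \<Rightarrow> (pt \<Rightarrow> pt) set" where
  "Diff S = {f. bij_betw f S S \<and> C1_map S S f \<and> C1_map S S (inv_into S f)
               \<and> (\<forall>x. x \<notin> S \<longrightarrow> f x = x)}"

text \<open>A C1 isotopy: a path t in [0,1] to H t in Diff(S) that is continuous for the
 C1 topology, i.e. H and its derivative along S (computed in charts) are jointly
 continuous in (t,x).\<close>
definition C1_isotopy :: "pt set \<Rightarrow> (real \<Rightarrow> pt \<Rightarrow> pt) \<Rightarrow> bool" where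
  "C1_isotopy S H \<longleftrightarrow>
     (\<forall>t\<in>{0..1}. H t \<in> Diff S) \<and>
     continuous_on ({0..1} \<times> S) (\<lambda>(t,x). H t x) \<and>
     (\<forall>\<phi> \<phi>' V. chart S \<phi> \<phi>' V \<longrightarrow>
        (\<exists>D :: real \<times> (real^2) \<Rightarrow> ((real^2) \<Rightarrow>\<^sub>L pt).
           continuous_on ({0..1} \<times> V) D \<and>
           (\<forall>t\<in>{0..1}. \<forall>v\<in>V. ((\<lambda>w. H t (\<phi> w)) has_derivative blinfun_apply (D (t,v))) (at v))))"

text \<open>Diff(S)_0: identity component (= path component of the identity) of Diff(S).\<close>
definition Diff0 :: "pt set \<Rightarrow> (pt \<Rightarrow> pt) set" where
  "Diff0 S = {f \<in> Diff S. \<exists>H. C1_isotopy S H \<and> H 0 = id \<and> H 1 = f}"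

text \<open>Words over a generating set A: letters (True,g) = g, (False,g) = g^{-1}.\<close>
definition word_eval :: "pt set \<Rightarrow> (bool \<times> (pt \<Rightarrow> pt)) list \<Rightarrow> (pt \<Rightarrow> pt)" where
  "word_eval S w = foldr (\<lambda>(b,g) h. (if b then g else dinv S g) \<circ> h) w id"

definition gen_group :: "pt set \<Rightarrow> (pt \<Rightarrow> pt) set \<Rightarrow> (pt \<Rightarrow> pt) set" where
  "gen_group S A = {word_eval S w | w. set (map snd w) \<subseteq> A}"

definition word_length :: "pt set \<Rightarrow> (pt \<Rightarrow> pt) set \<Rightarrow> (pt \<Rightarrow> pt) \<Rightarrow> nat" where
  "word_length S A f = (LEAST n. \<exists>w. length w = n \<and> set (map snd w) \<subseteq> A \<and> word_eval S w = f)"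

definition distortion_element :: "pt set \<Rightarrow> (pt \<Rightarrow> pt) set \<Rightarrow> (pt \<Rightarrow> pt) \<Rightarrow> bool" where
  "distortion_element S A f \<longleftrightarrow> finite A \<and> f \<in> gen_group S A \<and>
     (\<forall>n>0. (f ^^ n) \<noteq> id) \<and>
     liminf (\<lambda>n. ereal (real (word_length S A (f ^^ n)) / real n)) = 0"

definition two_fold_cover :: "pt set \<Rightarrow> pt set \<Rightarrow> (pt \<Rightarrow> pt) \<Rightarrow> bool" where
  "two_fold_cover S2 S p \<longleftrightarrow> covering_space S2 p S \<and> C1_map S2 S p \<and>
     (\<forall>x\<in>S2. \<exists>W. openin (top_of_set S2) W \<and> x \<in> W \<and> inj_on p W \<and>
         openin (top_of_set S) (p ` W) \<and> C1_map (p ` W) S2 (inv_into W p)) \<and>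
     (\<forall>y\<in>S. card {x\<in>S2. p x = y} = 2)"

end

theory Submission
  imports Defs
begin

definition C1_at :: "pt set \<Rightarrow> (pt \<Rightarrow> pt) \<Rightarrow> pt \<Rightarrow> bool" where
  "C1_at A F x \<longleftrightarrow> (\<exists>U g. open U \<and> x \<in> U \<and> C1_on g U \<and> (\<forall>y\<in>A \<inter> U. g y = F y))"

lemma C1_map_iff: "C1_map A B F \<longleftrightarrow> F ` A \<subseteq> B \<and> (\<forall>x\<in>A. C1_at A F x)"
  unfolding C1_map_def C1_at_def by blast

lemma C1_on_cont:
  assumes "C1_on g U" shows "continuous_on U g"
proof -
  from assms obtain g' where "\<forall>x\<in>U. (g has_derivative blinfun_apply (g' x)) (at x)"
    unfolding C1_on_def by blast
  then show ?thesis
    by (meson continuous_at_imp_continuous_on has_derivative_continuous)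
qed

lemma C1_on_compose:
  assumes "C1_on g1 U1" "C1_on g2 U2"
  shows "C1_on (g2 \<circ> g1) (U1 \<inter> g1 -` U2)"
proof -
  from assms(1) obtain g1' where d1: "\<forall>x\<in>U1. (g1 has_derivative blinfun_apply (g1' x)) (at x)"
    and c1: "continuous_on U1 g1'" unfolding C1_on_def by blast
  from assms(2) obtain g2' where d2: "\<forall>x\<in>U2. (g2 has_derivative blinfun_apply (g2' x)) (at x)"
    and c2: "continuous_on U2 g2'" unfolding C1_on_def by blast
  have cg1: "continuous_on U1 g1" using C1_on_cont[OF assms(1)] .
  show ?thesis unfolding C1_on_def
  proof (intro exI conjI ballI)
    fix x assume x: "x \<in> U1 \<inter> g1 -` U2"
    show "((g2 \<circ> g1) has_derivative blinfun_apply (g2' (g1 x) o\<^sub>L g1' x)) (at x)"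
      using has_derivative_compose[OF d1[rule_format, of x] d2[rule_format, of "g1 x"]] x
      by (simp add: o_def blinfun_compose.rep_eq)
  next
    have "continuous_on (U1 \<inter> g1 -` U2) (g2' \<circ> g1)"
      by (rule continuous_on_compose) (auto intro: continuous_on_subset[OF cg1] continuous_on_subset[OF c2])
    moreover have "continuous_on (U1 \<inter> g1 -` U2) g1'" using c1 by (rule continuous_on_subset) auto
    ultimately show "continuous_on (U1 \<inter> g1 -` U2) (\<lambda>x. g2' (g1 x) o\<^sub>L g1' x)"
      unfolding o_def by (intro continuous_intros)
  qed
qed

lemma C1_at_compose:
  assumes "C1_at A f x" "C1_at B g (f x)" "f ` A \<subseteq> B" "x \<in> A"
  shows "C1_at A (g \<circ> f) x"
proof -
  obtain U1 g1 where U1: "open U1" "x \<in> U1" "C1_on g1 U1" "\<forall>y\<in>A \<inter> U1. g1 y = f y"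
    using assms(1) unfolding C1_at_def by blast
  obtain U2 g2 where U2: "open U2" "f x \<in> U2" "C1_on g2 U2" "\<forall>y\<in>B \<inter> U2. g2 y = g y"
    using assms(2) unfolding C1_at_def by blast
  have "continuous_on U1 g1" using C1_on_cont[OF U1(3)] .
  then have op: "open (U1 \<inter> g1 -` U2)"
    using U1(1) U2(1) continuous_on_open_vimage by (metis inf_commute)
  show ?thesis unfolding C1_at_def
  proof (intro exI conjI ballI)
    show "open (U1 \<inter> g1 -` U2)" by (rule op)
    show "x \<in> U1 \<inter> g1 -` U2" using U1 U2 assms(4) by auto
    show "C1_on (g2 \<circ> g1) (U1 \<inter> g1 -` U2)" by (rule C1_on_compose[OF U1(3) U2(3)])
    fix y assume "y \<in> A \<inter> (U1 \<inter> g1 -` U2)"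
    then show "(g2 \<circ> g1) y = (g \<circ> f) y" using U1 U2 assms(3) by auto
  qed
qed

lemma C1_at_mono: "C1_at A F x \<Longrightarrow> A' \<subseteq> A \<Longrightarrow> C1_at A' F x"
  unfolding C1_at_def by blast

lemma C1_at_local:
  assumes "C1_at (A \<inter> Q) G x" "open Q" "x \<in> Q" "\<forall>y\<in>A \<inter> Q. G y = F y"
  shows "C1_at A F x"
proof -
  obtain U g where U: "open U" "x \<in> U" "C1_on g U" "\<forall>y\<in>(A \<inter> Q) \<inter> U. g y = G y"
    using assms(1) unfolding C1_at_def by blast
  have "C1_on g (U \<inter> Q)"
  proof -
    from U(3) obtain g' where a: "\<forall>x\<in>U. (g has_derivative blinfun_apply (g' x)) (at x)" and b: "continuous_on U g'"
      unfolding C1_on_def by blast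
    have "continuous_on (U \<inter> Q) g'" using b by (rule continuous_on_subset) auto
    then show ?thesis unfolding C1_on_def using a by blast
  qed
  moreover have "\<forall>y\<in>A \<inter> (U \<inter> Q). g y = F y" using U(4) assms(4) by auto
  moreover have "open (U \<inter> Q)" "x \<in> U \<inter> Q" using U(1,2) assms(2,3) by auto
  ultimately show ?thesis unfolding C1_at_def by blast
qed

lemma C1_at_cont:
  assumes "C1_at A F x" "x \<in> A" shows "continuous (at x within A) F"
proof -
  obtain U g where U: "open U" "x \<in> U" "C1_on g U" "\<forall>y\<in>A \<inter> U. g y = F y"
    using assms(1) unfolding C1_at_def by blast
  have "isCont g x" using C1_on_cont[OF U(3)] U(1,2) by (simp add: continuous_on_eq_continuous_at)
  then have "continuous (at x within A) g" by (rule continuous_at_imp_continuous_within)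
  have "open (U)" "x \<in> U" by (fact U)+
  have "openin (top_of_set A) (A \<inter> U)" using U(1) by (simp add: openin_open_Int)
  show ?thesis
    by (rule continuous_transform_within_openin[OF \<open>continuous (at x within A) g\<close> \<open>openin (top_of_set A) (A \<inter> U)\<close>])
       (use U(2,4) assms(2) in auto)
qed

lemma C1_map_cont: "C1_map A B F \<Longrightarrow> continuous_on A F"
  unfolding C1_map_iff continuous_on_eq_continuous_within by (auto intro: C1_at_cont)

definition good :: "pt set \<Rightarrow> (pt \<Rightarrow> pt) \<Rightarrow> bool" where
  "good S g \<longleftrightarrow> bij_betw g S S \<and> (\<forall>x. x \<notin> S \<longrightarrow> g x = x)"

definition letter :: "pt set \<Rightarrow> bool \<times> (pt \<Rightarrow> pt) \<Rightarrow> (pt \<Rightarrow> pt)" where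
  "letter S a = (if fst a then snd a else dinv S (snd a))"

lemma word_eval_Nil[simp]: "word_eval S [] = id"
  by (simp add: word_eval_def)

lemma word_eval_Cons[simp]: "word_eval S (a # w) = letter S a \<circ> word_eval S w"
  by (cases a) (simp add: word_eval_def letter_def)

lemma word_eval_append: "word_eval S (w1 @ w2) = word_eval S w1 \<circ> word_eval S w2"
  by (induction w1) auto

lemma good_dinv:
  assumes "good S g" shows "good S (dinv S g)" "dinv S g \<circ> g = id" "g \<circ> dinv S g = id"
proof -
  have b: "bij_betw g S S" and o: "\<forall>x. x \<notin> S \<longrightarrow> g x = x" using assms unfolding good_def by auto
  have "bij_betw (inv_into S g) S S" using b by (simp add: bij_betw_inv_into)
  then have "bij_betw (dinv S g) S S" unfolding dinv_def
    by (rule bij_betw_cong[THEN iffD1, rotated]) auto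
  then show "good S (dinv S g)" unfolding good_def dinv_def by auto
  show "dinv S g \<circ> g = id"
  proof
    fix x show "(dinv S g \<circ> g) x = id x"
    proof (cases "x \<in> S")
      case True
      then have "g x \<in> S" using b bij_betwE by blast
      then show ?thesis using True b by (simp add: dinv_def bij_betw_inv_into_left)
    next
      case False then show ?thesis using o by (simp add: dinv_def)
    qed
  qed
  show "g \<circ> dinv S g = id"
  proof
    fix x show "(g \<circ> dinv S g) x = id x"
    proof (cases "x \<in> S")
      case True
      then show ?thesis using b by (simp add: dinv_def bij_betw_inv_into_right)
    next
      case False then show ?thesis using o by (simp add: dinv_def)
    qed
  qed
qed

lemma good_comp: "good S f \<Longrightarrow> good S g \<Longrightarrow> good S (f \<circ> g)"
  unfolding good_def using bij_betw_trans by fastforce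

lemma good_id: "good S id" unfolding good_def by auto

lemma good_letter: "good S (snd a) \<Longrightarrow> good S (letter S a)"
  unfolding letter_def using good_dinv(1) by auto

lemma good_word: "(\<forall>a\<in>set w. good S (snd a)) \<Longrightarrow> good S (word_eval S w)"
  by (induction w) (auto intro: good_comp good_letter good_id)

definition invl :: "bool \<times> (pt \<Rightarrow> pt) \<Rightarrow> bool \<times> (pt \<Rightarrow> pt)" where
  "invl a = (\<not> fst a, snd a)"

definition invw :: "(bool \<times> (pt \<Rightarrow> pt)) list \<Rightarrow> (bool \<times> (pt \<Rightarrow> pt)) list" where
  "invw w = rev (map invl w)"

lemma letter_inv:
  assumes "good S (snd a)"
  shows "letter S (invl a) \<circ> letter S a = id" "letter S a \<circ> letter S (invl a) = id"
proof -
  have "dinv S (snd a) \<circ> snd a = id" "snd a \<circ> dinv S (snd a) = id"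
    using good_dinv[OF assms] by auto
  then show "letter S (invl a) \<circ> letter S a = id" "letter S a \<circ> letter S (invl a) = id"
    unfolding letter_def invl_def by auto
qed

lemma invw_Cons: "invw (a # w) = invw w @ [invl a]"
  by (simp add: invw_def)

lemma word_inv_both:
  assumes "\<forall>a\<in>set w. good S (snd a)"
  shows "word_eval S (invw w) \<circ> word_eval S w = id \<and> word_eval S w \<circ> word_eval S (invw w) = id"
  using assms
proof (induction w)
  case Nil
  show ?case by (simp add: invw_def)
next
  case (Cons a w)
  have ga: "good S (snd a)" using Cons.prems by auto
  have IH1: "word_eval S (invw w) \<circ> word_eval S w = id" and IH2: "word_eval S w \<circ> word_eval S (invw w) = id"
    using Cons.IH Cons.prems by (auto simp: fun_eq_iff)
  have e: "word_eval S (invw (a # w)) = word_eval S (invw w) \<circ> letter S (invl a)"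
    by (simp add: invw_Cons word_eval_append)
  have "word_eval S (invw (a # w)) \<circ> word_eval S (a # w)
        = word_eval S (invw w) \<circ> (letter S (invl a) \<circ> letter S a) \<circ> word_eval S w"
    by (simp add: e o_assoc)
  also have "\<dots> = id" using letter_inv[OF ga] IH1 by simp
  finally have 1: "word_eval S (invw (a # w)) \<circ> word_eval S (a # w) = id" .
  have "word_eval S (a # w) \<circ> word_eval S (invw (a # w))
        = letter S a \<circ> (word_eval S w \<circ> word_eval S (invw w)) \<circ> letter S (invl a)"
    by (simp add: e o_assoc)
  also have "\<dots> = id" using letter_inv[OF ga] IH2 by simp
  finally show ?case using 1 by blast
qed

lemmas word_inv = word_inv_both[THEN conjunct1] word_inv_both[THEN conjunct2]

lemma set_invw: "set (map snd (invw w)) = set (map snd w)"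
  by (auto simp: invw_def invl_def image_image)

lemma word_funpow: "word_eval S (concat (replicate n w)) = (word_eval S w) ^^ n"
  by (induction n) (auto simp: word_eval_append)

lemma word_rep: "word_eval S (replicate n (True, f)) = f ^^ n"
  by (induction n) (auto simp: letter_def)

lemma Diff_good: "g \<in> Diff S \<Longrightarrow> good S g"
  unfolding Diff_def good_def by auto

lemma Diff_cont: "g \<in> Diff S \<Longrightarrow> continuous_on S g"
  unfolding Diff_def using C1_map_cont by blast

lemma Diff_dinv_cont: assumes "g \<in> Diff S" shows "continuous_on S (dinv S g)"
proof -
  have "continuous_on S (inv_into S g)" using assms unfolding Diff_def using C1_map_cont by blast
  then show ?thesis by (rule continuous_on_cong[THEN iffD1, rotated 2]) (auto simp: dinv_def)
qed

lemma letter_cont: "snd a \<in> Diff S \<Longrightarrow> continuous_on S (letter S a)"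
  unfolding letter_def using Diff_cont Diff_dinv_cont by auto

lemma good_maps: "good S g \<Longrightarrow> x \<in> S \<Longrightarrow> g x \<in> S"
  unfolding good_def using bij_betwE by blast

lemma word_cont: "\<forall>a\<in>set w. snd a \<in> Diff S \<Longrightarrow> continuous_on S (word_eval S w)"
proof (induction w)
  case Nil then show ?case by (simp add: continuous_on_id)
next
  case (Cons a w)
  have g: "good S (word_eval S w)" using Cons.prems Diff_good by (auto intro!: good_word)
  have "continuous_on S (letter S a \<circ> word_eval S w)"
  proof (rule continuous_on_compose)
    show "continuous_on S (word_eval S w)" using Cons by auto
    have "word_eval S w ` S \<subseteq> S" using g good_maps by blast
    moreover have "continuous_on S (letter S a)" using Cons.prems letter_cont by auto
    ultimately show "continuous_on (word_eval S w ` S) (letter S a)" using continuous_on_subset by blast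
  qed
  then show ?case by simp
qed

lemma lift_word:
  assumes pS: "p ` S2 \<subseteq> S" and lf: "\<forall>g\<in>A. lf g \<in> Diff S2 \<and> (\<forall>x\<in>S2. p (lf g x) = g (p x))"
    and AD: "A \<subseteq> Diff S" and w: "set (map snd w) \<subseteq> A"
  shows "\<forall>x\<in>S2. p (word_eval S2 (map (\<lambda>(b,g). (b, lf g)) w) x) = word_eval S w (p x)"
  using w
proof (induction w)
  case Nil then show ?case by simp
next
  case (Cons a w)
  obtain b g where a: "a = (b, g)" by (cases a)
  have gA: "g \<in> A" using Cons.prems a by auto
  have IH: "\<forall>x\<in>S2. p (word_eval S2 (map (\<lambda>(b,g). (b, lf g)) w) x) = word_eval S w (p x)"
    using Cons by auto
  have gw: "good S2 (word_eval S2 (map (\<lambda>(b,g). (b, lf g)) w))"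
  proof (intro good_word ballI)
    fix c assume "c \<in> set (map (\<lambda>(b,g). (b, lf g)) w)"
    then obtain b' g' where "c = (b', lf g')" "g' \<in> A" using Cons.prems by auto
    then show "good S2 (snd c)" using lf Diff_good by auto
  qed
  show ?case
  proof
    fix x assume x: "x \<in> S2"
    define y where "y = word_eval S2 (map (\<lambda>(b,g). (b, lf g)) w) x"
    have yS: "y \<in> S2" using good_maps[OF gw x] y_def by simp
    have py: "p y = word_eval S w (p x)" using IH x y_def by simp
    have lfD: "lf g \<in> Diff S2" and lfp: "\<forall>x\<in>S2. p (lf g x) = g (p x)" using lf gA by auto
    have gD: "g \<in> Diff S" using AD gA by auto
    have "p (letter S2 (b, lf g) y) = letter S (b, g) (p y)"
    proof (cases b)
      case True then show ?thesis using lfp yS by (simp add: letter_def)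
    next
      case False
      have bl: "bij_betw (lf g) S2 S2" using lfD unfolding Diff_def by auto
      have bg: "bij_betw g S S" using gD unfolding Diff_def by auto
      define u where "u = inv_into S2 (lf g) y"
      have uS: "u \<in> S2" using bl yS u_def by (metis bij_betwE bij_betw_inv_into)
      have lu: "lf g u = y" using bl yS u_def by (simp add: bij_betw_inv_into_right)
      have puS: "p u \<in> S" using pS uS by auto
      have pyS: "p y \<in> S" using pS yS by auto
      have "p y = g (p u)" using lfp uS lu by auto
      then have "inv_into S g (p y) = p u" using bg puS by (simp add: bij_betw_inv_into_left)
      then show ?thesis using False yS pyS u_def by (simp add: letter_def dinv_def)
    qed
    then show "p (word_eval S2 (map (\<lambda>(b,g). (b, lf g)) (a # w)) x) = word_eval S (a # w) (p x)"
      using a py y_def by simp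
  qed
qed

lemma fiber3:
  assumes cov: "two_fold_cover S2 S p" and "a \<in> S2" "b \<in> S2" "c \<in> S2"
    and "p b = p a" "p c = p a" "b \<noteq> a" "c \<noteq> a"
  shows "b = c"
proof -
  have "p a \<in> S" using cov assms(2) unfolding two_fold_cover_def
    using covering_space_imp_surjective by blast
  then have "card {x\<in>S2. p x = p a} = 2" using cov unfolding two_fold_cover_def by blast
  then obtain u v where uv: "{x\<in>S2. p x = p a} = {u, v}" "u \<noteq> v" unfolding card_2_iff by blast
  have "a \<in> {u,v}" "b \<in> {u,v}" "c \<in> {u,v}" using assms uv(1) by blast+
  then show ?thesis using assms(7,8) by auto
qed

lemma lift_uniq:
  fixes S2 S :: "pt set" and p L1 L2 :: "pt \<Rightarrow> pt"
  assumes cov: "covering_space S2 p S" and conn: "connected S2"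
    and L1: "continuous_on S2 L1" "L1 ` S2 \<subseteq> S2"
    and L2: "continuous_on S2 L2" "L2 ` S2 \<subseteq> S2"
    and eq: "\<forall>x\<in>S2. p (L1 x) = p (L2 x)" and x0: "x0 \<in> S2" "L1 x0 = L2 x0" and x: "x \<in> S2"
  shows "L1 x = L2 x"
proof (rule covering_space_lift_unique[OF cov, of L1 x0 L2 S2 "p \<circ> L1"])
  have cp: "continuous_on S2 p" using cov covering_space_imp_continuous by blast
  show "continuous_on S2 (p \<circ> L1)" by (rule continuous_on_compose[OF L1(1) continuous_on_subset[OF cp L1(2)]])
  show "p \<circ> L1 \<in> S2 \<rightarrow> S" using L1(2) covering_space_imp_surjective[OF cov] by auto
qed (use L1 L2 eq conn x0 x in auto)

lemma cover_basic:
  assumes "two_fold_cover S2 S p"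
  shows "covering_space S2 p S" "p ` S2 = S" "C1_map S2 S p" "continuous_on S2 p"
proof -
  show c: "covering_space S2 p S" using assms unfolding two_fold_cover_def by simp
  show "p ` S2 = S" by (rule covering_space_imp_surjective[OF c])
  show "continuous_on S2 p" by (rule covering_space_imp_continuous[OF c])
  show "C1_map S2 S p" using assms unfolding two_fold_cover_def by simp
qed

lemma cover_local:
  assumes "two_fold_cover S2 S p" "z \<in> S2"
  obtains W OW where "W = S2 \<inter> OW" "open OW" "z \<in> W" "inj_on p W" "openin (top_of_set S) (p ` W)"
    "C1_map (p ` W) S2 (inv_into W p)"
proof -
  obtain W where W: "openin (top_of_set S2) W" "z \<in> W" "inj_on p W" "openin (top_of_set S) (p ` W)"
    "C1_map (p ` W) S2 (inv_into W p)"
    using assms unfolding two_fold_cover_def by blast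
  then obtain OW where "open OW" "W = S2 \<inter> OW" unfolding openin_open by blast
  then show ?thesis using that W by blast
qed

lemma lift_C1:
  assumes cov: "two_fold_cover S2 S p" and cF: "continuous_on S2 F" and FS: "F ` S2 \<subseteq> S2"
    and G: "C1_map S S G" and eq: "\<forall>y\<in>S2. p (F y) = G (p y)"
  shows "C1_map S2 S2 F"
  unfolding C1_map_iff
proof (intro conjI ballI FS)
  fix x assume x: "x \<in> S2"
  have zS: "F x \<in> S2" using FS x by auto
  obtain W OW where W: "W = S2 \<inter> OW" "open OW" "F x \<in> W" "inj_on p W" "C1_map (p ` W) S2 (inv_into W p)"
    by (rule cover_local[OF cov zS])
  have "openin (top_of_set S2) (S2 \<inter> F -` OW)" using continuous_openin_preimage_gen[OF cF W(2)] .
  then obtain Q where Q: "open Q" "S2 \<inter> F -` OW = S2 \<inter> Q" unfolding openin_open by blast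
  have FW: "F y \<in> W" if "y \<in> S2 \<inter> Q" for y
  proof -
    have "y \<in> S2 \<inter> F -` OW" using that Q(2) by simp
    then show ?thesis using FS W(1) by blast
  qed
  have xQ: "x \<in> Q"
  proof -
    have "x \<in> S2 \<inter> F -` OW" using W(1,3) x by blast
    then show ?thesis using Q(2) by blast
  qed
  have pC: "C1_map S2 S p" and pS: "p ` S2 = S" using cover_basic[OF cov] by auto
  have "C1_at S2 p x" using pC x unfolding C1_map_iff by blast
  then have c1: "C1_at (S2 \<inter> Q) p x" by (rule C1_at_mono) blast
  have c2: "C1_at S G (p x)" using G x pS unfolding C1_map_iff by auto
  have c12: "C1_at (S2 \<inter> Q) (G \<circ> p) x"
    by (rule C1_at_compose[OF c1 c2]) (use pS x xQ in auto)
  have img: "(G \<circ> p) ` (S2 \<inter> Q) \<subseteq> p ` W"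
  proof
    fix u assume "u \<in> (G \<circ> p) ` (S2 \<inter> Q)"
    then obtain y where y: "y \<in> S2 \<inter> Q" "u = G (p y)" by auto
    from y(1) have "F y \<in> W" by (rule FW)
    moreover have "u = p (F y)" using y eq by simp
    ultimately show "u \<in> p ` W" by blast
  qed
  have c3: "C1_at (p ` W) (inv_into W p) ((G \<circ> p) x)"
    using W(5) W(3) eq x unfolding C1_map_iff by auto
  have c123: "C1_at (S2 \<inter> Q) (inv_into W p \<circ> (G \<circ> p)) x"
    by (rule C1_at_compose[OF c12 c3 img]) (use x xQ in auto)
  show "C1_at S2 F x"
  proof (rule C1_at_local[OF c123 Q(1) xQ], intro ballI)
    fix y assume y: "y \<in> S2 \<inter> Q"
    then have "F y \<in> W" by (rule FW)
    moreover have "G (p y) = p (F y)" using eq y by simp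
    ultimately show "(inv_into W p \<circ> (G \<circ> p)) y = F y" using W(4) by simp
  qed
qed

lemma fiber_two:
  assumes cov: "two_fold_cover S2 S p" and v: "v \<in> S"
  obtains x1 x2 where "x1 \<in> S2" "x2 \<in> S2" "p x1 = v" "p x2 = v" "x1 \<noteq> x2"
proof -
  have "card {x\<in>S2. p x = v} = 2" using cov v unfolding two_fold_cover_def by blast
  then obtain u w where uv: "{x\<in>S2. p x = v} = {u, w}" "u \<noteq> w" unfolding card_2_iff by blast
  have "u \<in> {x\<in>S2. p x = v}" "w \<in> {x\<in>S2. p x = v}" using uv(1) by blast+
  then show ?thesis using that uv(2) by blast
qed

lemma lift_Diff:
  assumes cov: "two_fold_cover S2 S p" and comp: "compact S2" and GD: "G \<in> Diff S"
    and cF: "continuous_on S2 F" and FS: "F ` S2 \<subseteq> S2" and eq: "\<forall>y\<in>S2. p (F y) = G (p y)"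
    and injF: "inj_on F S2" and off: "\<forall>x. x \<notin> S2 \<longrightarrow> F x = x"
  shows "F \<in> Diff S2"
proof -
  have pS: "p ` S2 = S" using cover_basic[OF cov] by auto
  have bG: "bij_betw G S S" and C1G: "C1_map S S G" and C1Gi: "C1_map S S (inv_into S G)"
    using GD unfolding Diff_def by auto
  have surj: "F ` S2 = S2"
  proof
    show "F ` S2 \<subseteq> S2" by (rule FS)
    show "S2 \<subseteq> F ` S2"
    proof
      fix z assume z: "z \<in> S2"
      have wS: "p z \<in> S" using z pS by auto
      define v where "v = inv_into S G (p z)"
      have vS: "v \<in> S" using bG wS v_def by (metis bij_betwE bij_betw_inv_into)
      have Gv: "G v = p z" using bG wS v_def by (simp add: bij_betw_inv_into_right)
      obtain x1 x2 where x: "x1 \<in> S2" "x2 \<in> S2" "p x1 = v" "p x2 = v" "x1 \<noteq> x2"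
        using fiber_two[OF cov vS] by blast
      have F1: "F x1 \<in> S2" "p (F x1) = p z" using FS x eq Gv by auto
      have F2: "F x2 \<in> S2" "p (F x2) = p z" using FS x eq Gv by auto
      have ne: "F x1 \<noteq> F x2" using injF x by (meson inj_on_contraD)
      show "z \<in> F ` S2"
      proof (rule ccontr)
        assume "z \<notin> F ` S2"
        then have "F x1 \<noteq> z" "F x2 \<noteq> z" using x by auto
        then have "F x1 = F x2" using fiber3[OF cov z F1(1) F2(1) F1(2) F2(2)] by blast
        then show False using ne by simp
      qed
    qed
  qed
  have bF: "bij_betw F S2 S2" using injF surj by (simp add: bij_betw_def)
  obtain g' where hom: "homeomorphism S2 S2 F g'"
    using homeomorphism_compact[OF comp cF surj injF] by blast
  have gi: "inv_into S2 F y = g' y" if "y \<in> S2" for y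
  proof -
    have "g' y \<in> S2" "F (g' y) = y" using hom that unfolding homeomorphism_def by auto
    then show ?thesis using injF by (metis inv_into_f_f)
  qed
  have ci: "continuous_on S2 (inv_into S2 F)"
    using hom gi unfolding homeomorphism_def by (metis continuous_on_cong)
  have iS: "inv_into S2 F ` S2 \<subseteq> S2" using bF by (metis bij_betw_def bij_betw_inv_into order_refl)
  have ieq: "\<forall>y\<in>S2. p (inv_into S2 F y) = inv_into S G (p y)"
  proof
    fix y assume y: "y \<in> S2"
    define u where "u = inv_into S2 F y"
    have uS: "u \<in> S2" using iS y u_def by auto
    have Fu: "F u = y" using bF y u_def by (simp add: bij_betw_inv_into_right)
    have "p y = G (p u)" using eq uS Fu by auto
    moreover have "p u \<in> S" using pS uS by auto
    ultimately have "inv_into S G (p y) = p u" using bG by (simp add: bij_betw_inv_into_left)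
    then show "p (inv_into S2 F y) = inv_into S G (p y)" using u_def by simp
  qed
  have "C1_map S2 S2 F" by (rule lift_C1[OF cov cF FS C1G eq])
  moreover have "C1_map S2 S2 (inv_into S2 F)" by (rule lift_C1[OF cov ci iS C1Gi ieq])
  ultimately show ?thesis unfolding Diff_def using bF off by blast
qed

lemma lift_path_inj:
  fixes k :: "real \<times> pt \<Rightarrow> pt" and p :: "pt \<Rightarrow> pt"
  assumes cov: "covering_space S2 p S"
    and ck: "continuous_on ({0..1} \<times> S2) k" and kS: "k \<in> ({0..1} \<times> S2) \<rightarrow> S2"
    and k0: "\<forall>y\<in>S2. k (0, y) = y"
    and kp: "\<forall>s\<in>{0..1}. p (k (s, x)) = p (k (s, y))"
    and t: "t \<in> {0..1}" and x: "x \<in> S2" and y: "y \<in> S2" and e: "k (t, x) = k (t, y)"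
  shows "x = y"
proof -
  have sub: "{0..t} \<subseteq> {0..1}" using t by auto
  have cx: "continuous_on {0..t} (\<lambda>s. k (s, x))"
    by (rule continuous_on_compose2[OF ck]) (use sub x in \<open>auto intro!: continuous_intros\<close>)
  have cy: "continuous_on {0..t} (\<lambda>s. k (s, y))"
    by (rule continuous_on_compose2[OF ck]) (use sub y in \<open>auto intro!: continuous_intros\<close>)
  have cp: "continuous_on S2 p" using cov covering_space_imp_continuous by blast
  have pS: "p ` S2 = S" using cov covering_space_imp_surjective by blast
  have kxS: "(\<lambda>s. k (s, x)) \<in> {0..t} \<rightarrow> S2" using kS sub x by auto
  have kyS: "(\<lambda>s. k (s, y)) \<in> {0..t} \<rightarrow> S2" using kS sub y by auto
  have cf: "continuous_on {0..t} (\<lambda>s. p (k (s, x)))"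
    by (rule continuous_on_compose2[OF cp cx]) (use kxS in auto)
  have "k (0, x) = k (0, y)"
  proof (rule covering_space_lift_unique[OF cov, of "\<lambda>s. k (s, x)" t "\<lambda>s. k (s, y)" "{0..t}" "\<lambda>s. p (k (s, x))"])
    show "k (t, x) = k (t, y)" by (rule e)
    show "continuous_on {0..t} (\<lambda>s. p (k (s, x)))" by (rule cf)
    show "(\<lambda>s. p (k (s, x))) \<in> {0..t} \<rightarrow> S" using kxS pS by auto
    show "continuous_on {0..t} (\<lambda>s. k (s, x))" by (rule cx)
    show "(\<lambda>s. k (s, x)) \<in> {0..t} \<rightarrow> S2" by (rule kxS)
    show "continuous_on {0..t} (\<lambda>s. k (s, y))" by (rule cy)
    show "(\<lambda>s. k (s, y)) \<in> {0..t} \<rightarrow> S2" by (rule kyS)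
    show "\<And>s. s \<in> {0..t} \<Longrightarrow> p (k (s, x)) = p (k (s, y))" using kp sub by auto
    show "connected {0..t}" by simp
    show "t \<in> {0..t}" "0 \<in> {0..t}" using t by auto
  qed simp
  then show ?thesis using k0 x y by simp
qed

lemma cover_homeo:
  assumes cov: "two_fold_cover S2 S p" and W: "W \<subseteq> S2" "inj_on p W" "C1_map (p ` W) S2 (inv_into W p)"
  shows "homeomorphism W (p ` W) p (inv_into W p)"
  unfolding homeomorphism_def
proof (intro conjI ballI)
  show "continuous_on W p" using cover_basic(4)[OF cov] W(1) by (rule continuous_on_subset)
  show "continuous_on (p ` W) (inv_into W p)" using C1_map_cont[OF W(3)] .
  show "inv_into W p ` p ` W = W"
  proof
    show "inv_into W p ` p ` W \<subseteq> W" by (auto intro: inv_into_into)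
    show "W \<subseteq> inv_into W p ` p ` W"
    proof
      fix x assume "x \<in> W"
      then have "x = inv_into W p (p x)" using W(2) by simp
      then show "x \<in> inv_into W p ` p ` W" using \<open>x \<in> W\<close> by blast
    qed
  qed
qed (use W(2) in \<open>auto simp: f_inv_into_f\<close>)

lemma phi_cont:
  assumes "chart S2 \<phi> \<phi>' V" shows "continuous_on V \<phi>"
proof -
  have "\<forall>v\<in>V. (\<phi> has_derivative blinfun_apply (\<phi>' v)) (at v)" using assms unfolding chart_def by blast
  then show ?thesis by (meson continuous_at_imp_continuous_on has_derivative_continuous)
qed

lemma chart_push:
  assumes cov: "two_fold_cover S2 S p" and ch: "chart S2 \<phi> \<phi>' V" and v0: "v0 \<in> V"
  shows "\<exists>V0 \<psi>'. open V0 \<and> v0 \<in> V0 \<and> V0 \<subseteq> V \<and> chart S (p \<circ> \<phi>) \<psi>' V0"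
proof -
  have oV: "open V" and dphi: "\<forall>v\<in>V. (\<phi> has_derivative blinfun_apply (\<phi>' v)) (at v)"
    and cphi': "continuous_on V \<phi>'" and injphi: "\<forall>v\<in>V. inj (blinfun_apply (\<phi>' v))"
    and phiS: "\<phi> ` V \<subseteq> S2" and phiO: "openin (top_of_set S2) (\<phi> ` V)"
    using ch unfolding chart_def by blast+
  obtain \<psi> where hphi: "homeomorphism V (\<phi> ` V) \<phi> \<psi>" using ch unfolding chart_def by blast
  have cphi: "continuous_on V \<phi>" by (rule phi_cont[OF ch])
  have pS: "p ` S2 = S" and pC: "C1_map S2 S p" using cover_basic[OF cov] by auto
  define x0 where "x0 = \<phi> v0"
  have x0S: "x0 \<in> S2" using phiS v0 x0_def by auto
  obtain W0 O0 where W0: "W0 = S2 \<inter> O0" "open O0" "x0 \<in> W0" "inj_on p W0"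
    "openin (top_of_set S) (p ` W0)" "C1_map (p ` W0) S2 (inv_into W0 p)"
    by (rule cover_local[OF cov x0S])
  have "C1_at S2 p x0" using pC x0S unfolding C1_map_iff by blast
  then obtain U1 g1 where U1: "open U1" "x0 \<in> U1" "C1_on g1 U1" "\<forall>y\<in>S2 \<inter> U1. g1 y = p y"
    unfolding C1_at_def by blast
  obtain g1' where dg1: "\<forall>x\<in>U1. (g1 has_derivative blinfun_apply (g1' x)) (at x)"
    and cg1': "continuous_on U1 g1'" using U1(3) unfolding C1_on_def by blast
  have cg1: "continuous_on U1 g1" by (rule C1_on_cont[OF U1(3)])
  define V0 where "V0 = \<phi> -` (O0 \<inter> U1) \<inter> V"
  have oV0: "open V0" unfolding V0_def using cphi oV W0(2) U1(1) continuous_on_open_vimage by blast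
  have v0V0: "v0 \<in> V0" unfolding V0_def using v0 W0 U1 x0_def by auto
  have V0V: "V0 \<subseteq> V" unfolding V0_def by auto
  have phiW0: "\<phi> v \<in> W0" if "v \<in> V0" for v using that phiS W0(1) unfolding V0_def by auto
  have phiU1: "\<phi> v \<in> U1" if "v \<in> V0" for v using that unfolding V0_def by auto
  have phiS2: "\<phi> v \<in> S2" if "v \<in> V0" for v using that phiS unfolding V0_def by auto
  define \<psi>' where "\<psi>' v = g1' (\<phi> v) o\<^sub>L \<phi>' v" for v
  have dg1phi: "((g1 \<circ> \<phi>) has_derivative blinfun_apply (\<psi>' v)) (at v)" if "v \<in> V0" for v
  proof -
    have "((\<lambda>w. g1 (\<phi> w)) has_derivative (\<lambda>a. blinfun_apply (g1' (\<phi> v)) (blinfun_apply (\<phi>' v) a))) (at v)"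
      by (rule has_derivative_compose[OF dphi[rule_format] dg1[rule_format]]) (use that V0V phiU1 in auto)
    then show ?thesis unfolding \<psi>'_def by (simp add: o_def blinfun_compose.rep_eq)
  qed
  have dpphi: "((p \<circ> \<phi>) has_derivative blinfun_apply (\<psi>' v)) (at v)" if "v \<in> V0" for v
  proof (rule has_derivative_transform_within_open[OF dg1phi[OF that] oV0 that])
    fix w assume "w \<in> V0"
    then show "(g1 \<circ> \<phi>) w = (p \<circ> \<phi>) w" using U1(4) phiS2 phiU1 by simp
  qed
  have cpsi': "continuous_on V0 \<psi>'"
  proof -
    have "continuous_on V0 (g1' \<circ> \<phi>)"
    proof (rule continuous_on_compose)
      show "continuous_on V0 \<phi>" using cphi V0V by (rule continuous_on_subset)
      have "\<phi> ` V0 \<subseteq> U1" using phiU1 by auto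
      then show "continuous_on (\<phi> ` V0) g1'" using cg1' continuous_on_subset by blast
    qed
    moreover have "continuous_on V0 \<phi>'" using cphi' V0V by (rule continuous_on_subset)
    ultimately show ?thesis unfolding \<psi>'_def o_def by (intro continuous_intros)
  qed
  have injpsi: "inj (blinfun_apply (\<psi>' v))" if v: "v \<in> V0" for v
  proof -
    have pv: "p (\<phi> v) \<in> p ` W0" using phiW0 v by auto
    have "C1_at (p ` W0) (inv_into W0 p) (p (\<phi> v))" using W0(6) pv unfolding C1_map_iff by blast
    then obtain U3 g3 where U3: "open U3" "p (\<phi> v) \<in> U3" "C1_on g3 U3" "\<forall>y\<in>p ` W0 \<inter> U3. g3 y = inv_into W0 p y"
      unfolding C1_at_def by blast
    obtain g3' where dg3: "\<forall>x\<in>U3. (g3 has_derivative blinfun_apply (g3' x)) (at x)"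
      using U3(3) unfolding C1_on_def by blast
    have "continuous_on V0 (p \<circ> \<phi>)" using dpphi
      by (meson continuous_at_imp_continuous_on has_derivative_continuous)
    then have oN: "open ((p \<circ> \<phi>) -` U3 \<inter> V0)" using oV0 U3(1) continuous_on_open_vimage by blast
    have vN: "v \<in> (p \<circ> \<phi>) -` U3 \<inter> V0" using v U3(2) by auto
    have "((\<lambda>w. g3 ((p \<circ> \<phi>) w)) has_derivative (\<lambda>a. blinfun_apply (g3' (p (\<phi> v))) (blinfun_apply (\<psi>' v) a))) (at v)"
      by (rule has_derivative_compose[OF dpphi[OF v]]) (use dg3 U3(2) in auto)
    then have d1: "(\<phi> has_derivative (\<lambda>a. blinfun_apply (g3' (p (\<phi> v))) (blinfun_apply (\<psi>' v) a))) (at v)"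
    proof (rule has_derivative_transform_within_open[OF _ oN vN])
      fix w assume w: "w \<in> (p \<circ> \<phi>) -` U3 \<inter> V0"
      then have "p (\<phi> w) \<in> p ` W0 \<inter> U3" using phiW0 by auto
      then have "g3 (p (\<phi> w)) = inv_into W0 p (p (\<phi> w))" using U3(4) by blast
      also have "\<dots> = \<phi> w" using W0(4) phiW0 w by simp
      finally show "g3 ((p \<circ> \<phi>) w) = \<phi> w" by simp
    qed
    have "(\<lambda>a. blinfun_apply (g3' (p (\<phi> v))) (blinfun_apply (\<psi>' v) a)) = blinfun_apply (\<phi>' v)"
      by (rule has_derivative_unique[OF d1 dphi[rule_format]]) (use v V0V in auto)
    then have "\<And>a. blinfun_apply (g3' (p (\<phi> v))) (blinfun_apply (\<psi>' v) a) = blinfun_apply (\<phi>' v) a"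
      by metis
    moreover have "inj (blinfun_apply (\<phi>' v))" using injphi v V0V by auto
    ultimately show ?thesis unfolding inj_def by metis
  qed
  have img: "(p \<circ> \<phi>) ` V0 \<subseteq> S" using phiS2 pS by auto
  have hW0: "homeomorphism W0 (p ` W0) p (inv_into W0 p)"
    by (rule cover_homeo[OF cov _ W0(4) W0(6)]) (use W0(1) in auto)
  have phiV0W0: "\<phi> ` V0 \<subseteq> W0" using phiW0 by auto
  have h1: "homeomorphism V0 (\<phi> ` V0) \<phi> \<psi>"
    by (rule homeomorphism_of_subsets[OF hphi V0V]) auto
  have h2: "homeomorphism (\<phi> ` V0) (p ` \<phi> ` V0) p (inv_into W0 p)"
    by (rule homeomorphism_of_subsets[OF hW0 phiV0W0]) auto
  have h12: "homeomorphism V0 ((p \<circ> \<phi>) ` V0) (p \<circ> \<phi>) (\<psi> \<circ> inv_into W0 p)"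
    using homeomorphism_compose[OF h1 h2] by (simp add: image_comp)
  have "openin (top_of_set V) V0" using oV0 V0V by (simp add: open_subset)
  then have "openin (top_of_set (\<phi> ` V)) (\<phi> ` V0)" by (rule homeomorphism_imp_open_map[OF hphi])
  then have o1: "openin (top_of_set S2) (\<phi> ` V0)" using phiO by (rule openin_trans)
  have "openin (top_of_set W0) (\<phi> ` V0)"
    by (rule openin_subset_trans[OF o1 phiV0W0]) (use W0(1) in auto)
  then have "openin (top_of_set (p ` W0)) (p ` \<phi> ` V0)" by (rule homeomorphism_imp_open_map[OF hW0])
  then have "openin (top_of_set S) (p ` \<phi> ` V0)" using W0(5) by (rule openin_trans)
  then have oimg: "openin (top_of_set S) ((p \<circ> \<phi>) ` V0)" by (simp add: image_comp)
  have "chart S (p \<circ> \<phi>) \<psi>' V0"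
    unfolding chart_def using oV0 dpphi cpsi' injpsi img oimg h12 by blast
  then show ?thesis using oV0 v0V0 V0V by blast
qed

lemma deriv_local:
  fixes k :: "real \<times> pt \<Rightarrow> pt"
  assumes cov: "two_fold_cover S2 S p" and iso: "C1_isotopy S H"
    and ck: "continuous_on ({0..1} \<times> S2) k" and kS: "k \<in> ({0..1} \<times> S2) \<rightarrow> S2"
    and kp: "\<forall>t\<in>{0..1}. \<forall>x\<in>S2. p (k (t, x)) = H t (p x)"
    and ch: "chart S2 \<phi> \<phi>' V" and t0: "t0 \<in> {0..1}" and v0: "v0 \<in> V"
  shows "\<exists>N E. open N \<and> (t0, v0) \<in> N \<and> continuous_on (({0..1} \<times> V) \<inter> N) E \<and>
           (\<forall>t v. (t, v) \<in> ({0..1} \<times> V) \<inter> N \<longrightarrow>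
              ((\<lambda>w. k (t, \<phi> w)) has_derivative blinfun_apply (E (t, v))) (at v))"
proof -
  obtain V0 \<psi>' where V0: "open V0" "v0 \<in> V0" "V0 \<subseteq> V" and ch0: "chart S (p \<circ> \<phi>) \<psi>' V0"
    using chart_push[OF cov ch v0] by blast
  obtain D0 :: "real \<times> (real^2) \<Rightarrow> ((real^2) \<Rightarrow>\<^sub>L pt)" where cD0: "continuous_on ({0..1} \<times> V0) D0"
    and dD0: "\<forall>t\<in>{0..1}. \<forall>v\<in>V0. ((\<lambda>w. H t ((p \<circ> \<phi>) w)) has_derivative blinfun_apply (D0 (t, v))) (at v)"
    using iso ch0 unfolding C1_isotopy_def by blast
  have phiS: "\<phi> ` V \<subseteq> S2" and oV: "open V" using ch unfolding chart_def by auto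
  have cphi: "continuous_on V \<phi>" by (rule phi_cont[OF ch])
  have cp: "continuous_on S2 p" using cover_basic[OF cov] by auto
  define \<alpha> where "\<alpha> z = k (fst z, \<phi> (snd z))" for z
  have cal: "continuous_on ({0..1} \<times> V0) \<alpha>"
    unfolding \<alpha>_def
  proof (rule continuous_on_compose2[OF ck])
    have "continuous_on ({0..1} \<times> V0) (\<lambda>x. \<phi> (snd x))"
      by (rule continuous_on_compose2[OF continuous_on_subset[OF cphi V0(3)] continuous_on_snd]) auto
    then show "continuous_on ({0..1} \<times> V0) (\<lambda>x. (fst x, \<phi> (snd x)))"
      by (intro continuous_intros)
    show "(\<lambda>x. (fst x, \<phi> (snd x))) ` ({0..1} \<times> V0) \<subseteq> {0..1} \<times> S2" using phiS V0(3) by force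
  qed
  have alS: "\<alpha> z \<in> S2" if "z \<in> {0..1} \<times> V0" for z
  proof -
    have "snd z \<in> V" using that V0(3) by auto
    then have "\<phi> (snd z) \<in> S2" using phiS by blast
    moreover have "fst z \<in> {0..1}" using that by auto
    ultimately show ?thesis using kS unfolding \<alpha>_def by blast
  qed
  have cpal: "continuous_on ({0..1} \<times> V0) (p \<circ> \<alpha>)"
  proof (rule continuous_on_compose[OF cal])
    have "\<alpha> ` ({0..1} \<times> V0) \<subseteq> S2" using alS by blast
    then show "continuous_on (\<alpha> ` ({0..1} \<times> V0)) p" using cp continuous_on_subset by blast
  qed
  define z0 where "z0 = \<alpha> (t0, v0)"
  have z0S: "z0 \<in> S2" using alS t0 V0(2) z0_def by auto
  obtain W OW where W: "W = S2 \<inter> OW" "open OW" "z0 \<in> W" "inj_on p W" "C1_map (p ` W) S2 (inv_into W p)"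
    by (rule cover_local[OF cov z0S])
  have "C1_at (p ` W) (inv_into W p) (p z0)" using W(5) W(3) unfolding C1_map_iff by blast
  then obtain U3 g3 where U3: "open U3" "p z0 \<in> U3" "C1_on g3 U3" "\<forall>y\<in>p ` W \<inter> U3. g3 y = inv_into W p y"
    unfolding C1_at_def by blast
  obtain g3' where dg3: "\<forall>x\<in>U3. (g3 has_derivative blinfun_apply (g3' x)) (at x)"
    and cg3': "continuous_on U3 g3'" using U3(3) unfolding C1_on_def by blast
  define M where "M = ({0..1} \<times> V0 \<inter> \<alpha> -` OW) \<inter> ({0..1} \<times> V0 \<inter> (p \<circ> \<alpha>) -` U3)"
  have "openin (top_of_set ({0..1} \<times> V0)) M"
    unfolding M_def
    by (intro openin_Int continuous_openin_preimage_gen[OF cal W(2)] continuous_openin_preimage_gen[OF cpal U3(1)])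
  then obtain N' where N': "open N'" "M = ({0..1} \<times> V0) \<inter> N'" unfolding openin_open by blast
  define N where "N = N' \<inter> (UNIV \<times> V0)"
  have oN: "open N" unfolding N_def using N'(1) V0(1) by (intro open_Int open_Times) auto
  have XN: "({0..1} \<times> V) \<inter> N = M" unfolding N_def N'(2) using V0(3) by auto
  have inM: "(t0, v0) \<in> M" unfolding M_def using t0 V0(2) W U3(2) z0_def by auto
  define E where "E z = g3' (p (\<alpha> z)) o\<^sub>L D0 z" for z
  have MS: "M \<subseteq> {0..1} \<times> V0" unfolding M_def by auto
  have MU3: "p (\<alpha> z) \<in> U3" if "z \<in> M" for z using that unfolding M_def by auto
  have MW: "\<alpha> z \<in> W" if "z \<in> M" for z using that alS W(1) unfolding M_def by auto
  have cE: "continuous_on M E"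
  proof -
    have "continuous_on M (g3' \<circ> (p \<circ> \<alpha>))"
    proof (rule continuous_on_compose)
      show "continuous_on M (p \<circ> \<alpha>)" using cpal MS by (rule continuous_on_subset)
      have "(p \<circ> \<alpha>) ` M \<subseteq> U3" using MU3 by auto
      then show "continuous_on ((p \<circ> \<alpha>) ` M) g3'" using cg3' continuous_on_subset by blast
    qed
    moreover have "continuous_on M D0" using cD0 MS by (rule continuous_on_subset)
    ultimately show ?thesis unfolding E_def o_def by (intro continuous_intros)
  qed
  have dE: "((\<lambda>w. k (t, \<phi> w)) has_derivative blinfun_apply (E (t, v))) (at v)" if tv: "(t, v) \<in> M" for t v
  proof -
    have t: "t \<in> {0..1}" and v: "v \<in> V0" using tv MS by auto
    define Ot where "Ot = Pair t -` N' \<inter> V0"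
    have cPt: "continuous_on V0 (Pair t)" by (intro continuous_intros)
    have oOt: "open Ot" unfolding Ot_def
      using cPt N'(1) unfolding continuous_on_open_vimage[OF V0(1)] by blast
    have vOt: "v \<in> Ot" using tv N'(2) v unfolding Ot_def by auto
    have OtM: "(t, w) \<in> M" if "w \<in> Ot" for w using that t N'(2) unfolding Ot_def by auto
    have eqw: "g3 (H t ((p \<circ> \<phi>) w)) = k (t, \<phi> w)" if w: "w \<in> Ot" for w
    proof -
      have wM: "(t, w) \<in> M" by (rule OtM[OF w])
      have "w \<in> V" using wM MS V0(3) by blast
      then have wV: "\<phi> w \<in> S2" using phiS by blast
      have "H t ((p \<circ> \<phi>) w) = p (\<alpha> (t, w))" using kp t wV unfolding \<alpha>_def by simp
      moreover have "p (\<alpha> (t, w)) \<in> p ` W \<inter> U3" using MW[OF wM] MU3[OF wM] by auto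
      ultimately have "g3 (H t ((p \<circ> \<phi>) w)) = inv_into W p (p (\<alpha> (t, w)))" using U3(4) by simp
      also have "\<dots> = \<alpha> (t, w)" using W(4) MW[OF wM] by simp
      finally show ?thesis unfolding \<alpha>_def by simp
    qed
    have "\<phi> v \<in> S2" using phiS V0(3) v by blast
    then have hv: "H t ((p \<circ> \<phi>) v) = p (\<alpha> (t, v))"
      using kp t unfolding \<alpha>_def by auto
    have "((\<lambda>w. g3 (H t ((p \<circ> \<phi>) w))) has_derivative (\<lambda>a. blinfun_apply (g3' (H t ((p \<circ> \<phi>) v))) (blinfun_apply (D0 (t, v)) a))) (at v)"
      by (rule has_derivative_compose[OF dD0[rule_format, OF t v]]) (use dg3 MU3[OF tv] hv in auto)
    then have "((\<lambda>w. g3 (H t ((p \<circ> \<phi>) w))) has_derivative blinfun_apply (E (t, v))) (at v)"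
      unfolding E_def hv by (simp add: o_def blinfun_compose.rep_eq)
    then show ?thesis
      by (rule has_derivative_transform_within_open[OF _ oOt vOt]) (use eqw in auto)
  qed
  show ?thesis
    by (rule exI[of _ N], rule exI[of _ E]) (use oN inM XN cE dE in auto)
qed

lemma lift_chart_cond:
  fixes k :: "real \<times> pt \<Rightarrow> pt"
  assumes cov: "two_fold_cover S2 S p" and iso: "C1_isotopy S H"
    and ck: "continuous_on ({0..1} \<times> S2) k" and kS: "k \<in> ({0..1} \<times> S2) \<rightarrow> S2"
    and kp: "\<forall>t\<in>{0..1}. \<forall>x\<in>S2. p (k (t, x)) = H t (p x)"
    and ch: "chart S2 \<phi> \<phi>' V"
  shows "\<exists>D :: real \<times> (real^2) \<Rightarrow> ((real^2) \<Rightarrow>\<^sub>L pt).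
           continuous_on ({0..1} \<times> V) D \<and>
           (\<forall>t\<in>{0..1}. \<forall>v\<in>V. ((\<lambda>w. (\<lambda>t x. if x \<in> S2 then k (t, x) else x) t (\<phi> w)) has_derivative blinfun_apply (D (t, v))) (at v))"
proof -
  define X where "X = {0..1::real} \<times> V"
  define D where "D z = (SOME L. ((\<lambda>w. k (fst z, \<phi> w)) has_derivative blinfun_apply L) (at (snd z)))"
    for z :: "real \<times> (real^2)"
  have loc: "\<exists>N E. open N \<and> z \<in> N \<and> continuous_on (X \<inter> N) E \<and>
           (\<forall>t v. (t, v) \<in> X \<inter> N \<longrightarrow> ((\<lambda>w. k (t, \<phi> w)) has_derivative blinfun_apply (E (t, v))) (at v))"
    if z: "z \<in> X" for z
  proof -
    obtain t0 v0 where zz: "z = (t0, v0)" "t0 \<in> {0..1}" "v0 \<in> V" using z unfolding X_def by auto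
    show ?thesis using deriv_local[OF cov iso ck kS kp ch zz(2) zz(3)] unfolding X_def zz(1) .
  qed
  have dD: "((\<lambda>w. k (t, \<phi> w)) has_derivative blinfun_apply (D (t, v))) (at v)" if tv: "(t, v) \<in> X" for t v
  proof -
    obtain N E where "open N" "(t, v) \<in> N"
      "\<forall>t v. (t, v) \<in> X \<inter> N \<longrightarrow> ((\<lambda>w. k (t, \<phi> w)) has_derivative blinfun_apply (E (t, v))) (at v)"
      using loc[OF tv] by blast
    then have "\<exists>L. ((\<lambda>w. k (t, \<phi> w)) has_derivative blinfun_apply L) (at v)" using tv by blast
    from someI_ex[OF this] show ?thesis unfolding D_def by simp
  qed
  have cD: "continuous_on X D"
    unfolding continuous_on_eq_continuous_within
  proof
    fix z assume z: "z \<in> X"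
    obtain N E where NE: "open N" "z \<in> N" "continuous_on (X \<inter> N) E"
      "\<forall>t v. (t, v) \<in> X \<inter> N \<longrightarrow> ((\<lambda>w. k (t, \<phi> w)) has_derivative blinfun_apply (E (t, v))) (at v)"
      using loc[OF z] by blast
    have DE: "D y = E y" if y: "y \<in> X \<inter> N" for y
    proof -
      obtain t v where tv: "y = (t, v)" by (cases y)
      have "blinfun_apply (D (t, v)) = blinfun_apply (E (t, v))"
        by (rule has_derivative_unique[OF dD]) (use y tv NE(4) in auto)
      then show ?thesis using tv by (simp add: blinfun_apply_inject)
    qed
    have "continuous_on (X \<inter> N) D" using NE(3) DE by (metis continuous_on_cong)
    then have "continuous (at z within X \<inter> N) D" using z NE(2) continuous_on_eq_continuous_within by blast
    moreover have "at z within X = at z within X \<inter> N"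
      by (rule at_within_nhd[OF NE(2) NE(1)]) auto
    ultimately show "continuous (at z within X) D" by simp
  qed
  have phiS: "\<phi> ` V \<subseteq> S2" and oV: "open V" using ch unfolding chart_def by auto
  show ?thesis
  proof (intro exI[of _ D] conjI ballI)
    show "continuous_on ({0..1} \<times> V) D" using cD unfolding X_def .
    fix t :: real and v assume t: "t \<in> {0..1}" and v: "v \<in> V"
    have "((\<lambda>w. k (t, \<phi> w)) has_derivative blinfun_apply (D (t, v))) (at v)"
      using dD t v unfolding X_def by auto
    then show "((\<lambda>w. (\<lambda>t x. if x \<in> S2 then k (t, x) else x) t (\<phi> w)) has_derivative blinfun_apply (D (t, v))) (at v)"
    proof (rule has_derivative_transform_within_open[OF _ oV v])
      fix w assume "w \<in> V"
      then have "\<phi> w \<in> S2" using phiS by blast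
      then show "k (t, \<phi> w) = (\<lambda>t x. if x \<in> S2 then k (t, x) else x) t (\<phi> w)" by simp
    qed
  qed
qed

lemma lift_Diff0:
  assumes surf: "closed_surface S2" and cov: "two_fold_cover S2 S p" and g: "g \<in> Diff0 S"
  shows "\<exists>g2. g2 \<in> Diff0 S2 \<and> (\<forall>x\<in>S2. p (g2 x) = g (p x))"
proof -
  obtain H where iso: "C1_isotopy S H" and H0: "H 0 = id" and H1: "H 1 = g"
    using g unfolding Diff0_def by blast
  have HD: "\<forall>t\<in>{0..1}. H t \<in> Diff S" and cH: "continuous_on ({0..1} \<times> S) (\<lambda>(t, x). H t x)"
    using iso unfolding C1_isotopy_def by blast+
  have covs: "covering_space S2 p S" and pS: "p ` S2 = S" and cp: "continuous_on S2 p"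
    using cover_basic[OF cov] by auto
  have comp: "compact S2" using surf unfolding closed_surface_def by blast
  have HS: "H t x \<in> S" if "t \<in> {0..1}" "x \<in> S" for t x
  proof -
    have "bij_betw (H t) S S" using HD that(1) unfolding Diff_def by blast
    then show ?thesis using that(2) bij_betwE by blast
  qed
  define h where "h z = H (fst z) (p (snd z))" for z :: "real \<times> pt"
  have ch: "continuous_on ({0..1} \<times> S2) h"
  proof -
    have "continuous_on ({0..1} \<times> S2) (\<lambda>z. (fst z, p (snd z)))"
      by (intro continuous_intros continuous_on_compose2[OF cp]) auto
    moreover have "(\<lambda>z. (fst z, p (snd z))) ` ({0..1} \<times> S2) \<subseteq> {0..1} \<times> S" using pS by auto
    ultimately have "continuous_on ({0..1} \<times> S2) ((\<lambda>(t, x). H t x) \<circ> (\<lambda>z. (fst z, p (snd z))))"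
      using continuous_on_compose cH continuous_on_subset by blast
    then show ?thesis unfolding h_def o_def by (simp add: case_prod_beta)
  qed
  have him: "h \<in> ({0..1} \<times> S2) \<rightarrow> S" unfolding h_def using HS pS by auto
  have heq: "\<And>y. y \<in> S2 \<Longrightarrow> h (0, y) = p (id y)" unfolding h_def using H0 by simp
  obtain k where ck: "continuous_on ({0..1} \<times> S2) k" and kS: "k \<in> ({0..1} \<times> S2) \<rightarrow> S2"
    and k0: "\<And>y. y \<in> S2 \<Longrightarrow> k (0, y) = id y" and hk: "\<And>z. z \<in> {0..1} \<times> S2 \<Longrightarrow> h z = p (k z)"
  proof -
    have cid: "continuous_on S2 id" by (simp add: continuous_on_id)
    have fid: "id \<in> S2 \<rightarrow> S2" by auto
    show ?thesis using covering_space_lift_homotopy[OF covs ch him heq cid fid] that by blast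
  qed
  have kp: "\<forall>t\<in>{0..1}. \<forall>x\<in>S2. p (k (t, x)) = H t (p x)" using hk unfolding h_def by auto
  define Ht where "Ht = (\<lambda>t x. if x \<in> S2 then k (t, x) else x)"
  have HtD: "Ht t \<in> Diff S2" if t: "t \<in> {0..1}" for t
  proof (rule lift_Diff[OF cov comp HD[rule_format, OF t]])
    have "continuous_on S2 (\<lambda>x. k (t, x))"
      using continuous_on_o_Pair[OF ck t] by (simp add: o_def)
    then show "continuous_on S2 (Ht t)" unfolding Ht_def by (rule continuous_on_cong[THEN iffD1, rotated 2]) auto
    show "Ht t ` S2 \<subseteq> S2" unfolding Ht_def using kS t by auto
    show "\<forall>y\<in>S2. p (Ht t y) = H t (p y)" unfolding Ht_def using kp t by auto
    show "\<forall>x. x \<notin> S2 \<longrightarrow> Ht t x = x" unfolding Ht_def by auto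
    have bH: "bij_betw (H t) S S" using HD t unfolding Diff_def by auto
    show "inj_on (Ht t) S2"
    proof (rule inj_onI)
      fix x y assume x: "x \<in> S2" and y: "y \<in> S2" and e: "Ht t x = Ht t y"
      have e': "k (t, x) = k (t, y)" using e x y unfolding Ht_def by simp
      have "H t (p x) = H t (p y)" using kp t x y e' by metis
      moreover have "p x \<in> S" "p y \<in> S" using pS x y by auto
      ultimately have pxy: "p x = p y" using bH by (metis bij_betw_imp_inj_on inj_onD)
      have kpp: "\<forall>s\<in>{0..1}. p (k (s, x)) = p (k (s, y))" using kp x y pxy by simp
      show "x = y" by (rule lift_path_inj[OF covs ck kS _ kpp t x y e']) (use k0 in simp)
    qed
  qed
  have iso2: "C1_isotopy S2 Ht"
    unfolding C1_isotopy_def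
  proof (intro conjI ballI allI impI)
    show "\<And>t. t \<in> {0..1} \<Longrightarrow> Ht t \<in> Diff S2" by (rule HtD)
    show "continuous_on ({0..1} \<times> S2) (\<lambda>(t, x). Ht t x)"
      using ck by (rule continuous_on_cong[THEN iffD1, rotated 2]) (auto simp: Ht_def)
    fix \<phi> \<phi>' V assume chV: "chart S2 \<phi> \<phi>' V"
    show "\<exists>D. continuous_on ({0..1} \<times> V) D \<and>
            (\<forall>t\<in>{0..1}. \<forall>v\<in>V. ((\<lambda>w. Ht t (\<phi> w)) has_derivative blinfun_apply (D (t, v))) (at v))"
      using lift_chart_cond[OF cov iso ck kS kp chV] unfolding Ht_def .
  qed
  have Ht0: "Ht 0 = id" unfolding Ht_def using k0 by (auto simp: fun_eq_iff)
  have "Ht 1 \<in> Diff0 S2" unfolding Diff0_def using HtD[of 1] iso2 Ht0 by auto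
  moreover have "\<forall>x\<in>S2. p (Ht 1 x) = g (p x)" unfolding Ht_def using kp H1 by auto
  ultimately show ?thesis by blast
qed

lemma wlen_le:
  assumes "set (map snd w) \<subseteq> A" "word_eval S w = F"
  shows "word_length S A F \<le> length w"
  unfolding word_length_def by (rule Least_le) (use assms in blast)

lemma Diff0_Diff: "Diff0 S \<subseteq> Diff S" unfolding Diff0_def by auto

lemma liminf_bound:
  fixes a b :: "nat \<Rightarrow> nat" and c :: nat
  assumes le: "\<forall>n. a n \<le> b n + c"
    and lim: "liminf (\<lambda>n. ereal (real (b n) / real n)) = 0"
  shows "liminf (\<lambda>n. ereal (real (a n) / real n)) = 0"
proof (rule antisym)
  have "liminf (\<lambda>n. ereal (real (a n) / real n))
      \<le> liminf (\<lambda>n. ereal (real (b n) / real n) + ereal (real c / real n))"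
  proof (rule Liminf_mono, rule always_eventually, rule allI)
    fix n
    have "real (a n) / real n \<le> (real (b n) + real c) / real n"
      using le by (intro divide_right_mono) (auto simp: of_nat_add[symmetric] simp del: of_nat_add)
    then show "ereal (real (a n) / real n) \<le> ereal (real (b n) / real n) + ereal (real c / real n)"
      by (simp add: add_divide_distrib)
  qed
  also have "\<dots> \<le> liminf (\<lambda>n. ereal (real (b n) / real n)) + limsup (\<lambda>n. ereal (real c / real n))"
    by (rule ereal_liminf_limsup_add)
  also have "limsup (\<lambda>n. ereal (real c / real n)) = 0"
  proof -
    have "(\<lambda>n. real c / real n) \<longlonglongrightarrow> 0" by (rule lim_const_over_n)
    then have "(\<lambda>n. ereal (real c / real n)) \<longlonglongrightarrow> ereal 0" by (rule tendsto_ereal)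
    then show ?thesis using lim_imp_Limsup[OF trivial_limit_sequentially] zero_ereal_def by metis
  qed
  finally show "liminf (\<lambda>n. ereal (real (a n) / real n)) \<le> 0" using lim by simp
  show "0 \<le> liminf (\<lambda>n. ereal (real (a n) / real n))"
    by (rule Liminf_bounded) auto
qed

theorem lemma6p4:
  fixes S S2 :: "pt set" and p f f2 :: "pt \<Rightarrow> pt"
  assumes "closed_surface S" and "closed_surface S2"
    and "two_fold_cover S2 S p"
    and "f \<in> Diff0 S" and "f2 \<in> Diff0 S2"
    and "\<forall>x\<in>S2. p (f2 x) = f (p x)"
    and "\<exists>A. A \<subseteq> Diff0 S \<and> distortion_element S A f"
  shows "\<exists>A2. A2 \<subseteq> Diff0 S2 \<and> distortion_element S2 A2 f2"
proof -
  from assms(7) obtain A where AD0: "A \<subseteq> Diff0 S" and dist: "distortion_element S A f" by blast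
  have finA: "finite A" and fG: "f \<in> gen_group S A" and ord: "\<forall>n>0. f ^^ n \<noteq> id"
    and lim: "liminf (\<lambda>n. ereal (real (word_length S A (f ^^ n)) / real n)) = 0"
    using dist unfolding distortion_element_def by auto
  have cov: "covering_space S2 p S" using assms(3) unfolding two_fold_cover_def by blast
  have pS: "p ` S2 = S" using covering_space_imp_surjective[OF cov] .
  have conn: "connected S2" using assms(2) unfolding closed_surface_def by blast
  have "\<forall>g\<in>A. \<exists>g2. g2 \<in> Diff0 S2 \<and> (\<forall>x\<in>S2. p (g2 x) = g (p x))"
    using lift_Diff0[OF assms(2,3)] AD0 by blast
  then obtain lf where lf0: "\<forall>g\<in>A. lf g \<in> Diff0 S2 \<and> (\<forall>x\<in>S2. p (lf g x) = g (p x))"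
    by metis
  have lf: "\<forall>g\<in>A. lf g \<in> Diff S2 \<and> (\<forall>x\<in>S2. p (lf g x) = g (p x))"
    using lf0 Diff0_Diff by blast
  have AD: "A \<subseteq> Diff S" using AD0 Diff0_Diff by blast
  have f2D: "f2 \<in> Diff S2" and fD: "f \<in> Diff S" using assms(4,5) Diff0_Diff by auto
  define A2 where "A2 = lf ` A \<union> {f2}"
  have A2D0: "A2 \<subseteq> Diff0 S2" unfolding A2_def using lf0 assms(5) by auto
  have A2D: "\<forall>g\<in>A2. g \<in> Diff S2" using A2D0 Diff0_Diff by blast
  have finA2: "finite A2" unfolding A2_def using finA by simp
  obtain w0 where w0: "set (map snd w0) \<subseteq> A" "word_eval S w0 = f"
    using fG unfolding gen_group_def by blast
  define wl where "wl n = word_length S A (f ^^ n)" for n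
  have "\<forall>n. \<exists>w. length w = wl n \<and> set (map snd w) \<subseteq> A \<and> word_eval S w = f ^^ n"
  proof
    fix n
    have "\<exists>w. set (map snd w) \<subseteq> A \<and> word_eval S w = f ^^ n"
      using w0 by (intro exI[of _ "concat (replicate n w0)"]) (force simp: word_funpow)
    then have "\<exists>m w. length w = m \<and> set (map snd w) \<subseteq> A \<and> word_eval S w = f ^^ n" by blast
    from LeastI_ex[OF this] show "\<exists>w. length w = wl n \<and> set (map snd w) \<subseteq> A \<and> word_eval S w = f ^^ n"
      unfolding wl_def word_length_def .
  qed
  then obtain W where W: "\<And>n. length (W n) = wl n" "\<And>n. set (map snd (W n)) \<subseteq> A"
    "\<And>n. word_eval S (W n) = f ^^ n" by metis
  define lw where "lw w = map (\<lambda>(b,g). (b, lf g)) w" for w :: "(bool \<times> (pt \<Rightarrow> pt)) list"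
  define L where "L n = word_eval S2 (lw (W n))" for n
  have lwA2: "set (map snd (lw (W n))) \<subseteq> A2" for n
    using W(2)[of n] unfolding lw_def A2_def by auto
  have lwD: "\<forall>a\<in>set (lw (W n)). snd a \<in> Diff S2" for n
    using lwA2[of n] A2D by auto
  have Lgood: "good S2 (L n)" for n
    unfolding L_def using lwD[of n] Diff_good by (intro good_word) auto
  have Lcont: "continuous_on S2 (L n)" for n
    unfolding L_def by (rule word_cont) (use lwD in auto)
  have Lp: "\<forall>x\<in>S2. p (L n x) = (f ^^ n) (p x)" for n
    using lift_word[OF _ lf AD W(2)[of n]] pS W(3)[of n] unfolding L_def lw_def by auto
  define F where "F n = word_eval S2 (replicate n (True, f2))" for n
  have Feq: "F n = f2 ^^ n" for n unfolding F_def by (rule word_rep)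
  have FD: "\<forall>a\<in>set (replicate n (True, f2)). snd a \<in> Diff S2" for n using f2D by auto
  have Fgood: "good S2 (F n)" for n
    unfolding F_def using FD[of n] Diff_good by (intro good_word) auto
  have Fcont: "continuous_on S2 (F n)" for n
    unfolding F_def by (rule word_cont) (use FD in auto)
  have f2S: "\<forall>x\<in>S2. f2 x \<in> S2" using Diff_good[OF f2D] good_maps by blast
  have Fp: "\<forall>x\<in>S2. p (F n x) = (f ^^ n) (p x)" for n
    unfolding Feq
  proof (induction n)
    case 0 then show ?case by simp
  next
    case (Suc n)
    show ?case
    proof
      fix x assume x: "x \<in> S2"
      have "(f2 ^^ n) x \<in> S2" using Fgood[of n] good_maps x Feq by metis
      then show "p ((f2 ^^ Suc n) x) = (f ^^ Suc n) (p x)" using Suc x assms(6) by simp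
    qed
  qed
  have LS: "L n ` S2 \<subseteq> S2" and FS: "F n ` S2 \<subseteq> S2" for n
    using Lgood Fgood good_maps by blast+
  have Loff: "\<forall>x. x \<notin> S2 \<longrightarrow> L n x = x" and Foff: "\<forall>x. x \<notin> S2 \<longrightarrow> F n x = x" for n
    using Lgood Fgood unfolding good_def by blast+
  have bound: "\<exists>c. \<forall>n. word_length S2 A2 (f2 ^^ n) \<le> wl n + c"
  proof (cases "\<forall>n. \<forall>x\<in>S2. L n x = F n x")
    case True
    have "word_length S2 A2 (f2 ^^ n) \<le> wl n + 0" for n
    proof -
      have "L n = F n"
      proof
        fix x show "L n x = F n x" using True Loff Foff by (cases "x \<in> S2") auto
      qed
      then have "word_eval S2 (lw (W n)) = f2 ^^ n" unfolding L_def Feq .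
      from wlen_le[OF lwA2 this] show ?thesis using W(1) by (simp add: lw_def)
    qed
    then show ?thesis by blast
  next
    case False
    then obtain n0 x0 where x0: "x0 \<in> S2" "L n0 x0 \<noteq> F n0 x0" by blast
    have diff0: "\<forall>x\<in>S2. L n0 x \<noteq> F n0 x"
    proof (intro ballI notI)
      fix x assume x: "x \<in> S2" "L n0 x = F n0 x"
      have "L n0 x0 = F n0 x0"
        by (rule lift_uniq[OF cov conn Lcont LS Fcont FS _ x(1) x(2) x0(1)]) (use Lp Fp in auto)
      then show False using x0 by simp
    qed
    define c where "c = n0 + length (W n0)"
    have "word_length S2 A2 (f2 ^^ n) \<le> wl n + c" for n
    proof (cases "\<forall>x\<in>S2. L n x = F n x")
      case True
      have "L n = F n"
      proof
        fix x show "L n x = F n x" using True Loff Foff by (cases "x \<in> S2") auto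
      qed
      then have "word_eval S2 (lw (W n)) = f2 ^^ n" unfolding L_def Feq .
      from wlen_le[OF lwA2 this] show ?thesis using W(1) by (simp add: lw_def)
    next
      case False
      have diffn: "\<forall>x\<in>S2. L n x \<noteq> F n x"
      proof (intro ballI notI)
        fix x assume x: "x \<in> S2" "L n x = F n x"
        from False obtain y where y: "y \<in> S2" "L n y \<noteq> F n y" by blast
        have "L n y = F n y"
          by (rule lift_uniq[OF cov conn Lcont LS Fcont FS _ x(1) x(2) y(1)]) (use Lp Fp in auto)
        then show False using y by simp
      qed
      define ww where "ww = replicate n0 (True, f2) @ invw (lw (W n0)) @ lw (W n)"
      have wwA2: "set (map snd ww) \<subseteq> A2"
        unfolding ww_def using lwA2[of n0] lwA2[of n] set_invw[of "lw (W n0)"] A2_def by auto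
      have invg: "\<forall>a\<in>set (lw (W n0)). good S2 (snd a)" using lwD Diff_good by blast
      define IL where "IL = word_eval S2 (invw (lw (W n0)))"
      have ILgood: "good S2 IL" unfolding IL_def
        using invg by (intro good_word) (auto simp: invw_def invl_def)
      have LIL: "L n0 \<circ> IL = id" unfolding L_def IL_def using word_inv(2)[OF invg] .
      have "F n0 \<circ> IL \<circ> L n = F n"
      proof
        fix x show "(F n0 \<circ> IL \<circ> L n) x = F n x"
        proof (cases "x \<in> S2")
          case False
          then show ?thesis using Loff Foff ILgood unfolding good_def by auto
        next
          case True
          define z where "z = L n x"
          define y where "y = IL z"
          have zS: "z \<in> S2" using LS True z_def by auto
          have yS: "y \<in> S2" using ILgood good_maps zS y_def by blast
          have Ly: "L n0 y = z" using LIL y_def by (metis comp_apply id_apply)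
          have aS: "F n x \<in> S2" using FS True by auto
          have bS: "F n0 y \<in> S2" using FS yS by auto
          have pa: "p (F n x) = p z" using Lp Fp True z_def by auto
          have pb: "p (F n0 y) = p z" using Lp Fp yS Ly by metis
          have "F n0 y = F n x"
            by (rule fiber3[OF assms(3) zS bS aS pb pa])
               (use diffn diff0 True yS z_def Ly in auto)
          then show ?thesis using y_def z_def by simp
        qed
      qed
      then have "word_eval S2 ww = f2 ^^ n"
        unfolding ww_def word_eval_append F_def[symmetric] IL_def[symmetric] Feq[symmetric]
        by (simp add: L_def o_assoc)
      from wlen_le[OF wwA2 this] show ?thesis
        using W(1) unfolding ww_def c_def by (simp add: lw_def invw_def)
    qed
    then show ?thesis by blast
  qed
  then obtain c where c: "\<forall>n. word_length S2 A2 (f2 ^^ n) \<le> wl n + c" by blast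
  have lim2: "liminf (\<lambda>n. ereal (real (word_length S2 A2 (f2 ^^ n)) / real n)) = 0"
    by (rule liminf_bound[OF c]) (use lim wl_def in simp)
  have f2G: "f2 \<in> gen_group S2 A2"
    unfolding gen_group_def A2_def by (intro CollectI exI[of _ "[(True, f2)]"]) (auto simp: letter_def)
  have ord2: "\<forall>n>0. f2 ^^ n \<noteq> id"
  proof (intro allI impI notI)
    fix n :: nat assume n: "n > 0" and e: "f2 ^^ n = id"
    have "good S (word_eval S (replicate n (True, f)))"
      by (intro good_word) (use fD Diff_good in auto)
    then have fgood: "good S (f ^^ n)" by (simp add: word_rep)
    have "f ^^ n = id"
    proof
      fix y show "(f ^^ n) y = id y"
      proof (cases "y \<in> S")
        case True
        then obtain x where x: "x \<in> S2" "y = p x" using pS by blast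
        then show ?thesis using Fp[of n] e Feq by simp
      next
        case False then show ?thesis using fgood unfolding good_def by simp
      qed
    qed
    then show False using ord n by blast
  qed
  show ?thesis
    using A2D0 finA2 f2G ord2 lim2 unfolding distortion_element_def by blast
qed

end
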